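(* For every positive integer $n$ with $n\not\equiv -1\pmod 7$, \[u(n,n+3)=\varepsilon(n,n+3)=\left\lfloor\frac{4n+12}{7}\right\rfloor.\] Moreover, for every positive integer $m$, $u(7m-1,7m+2)=4m$.
   Context: All matrices are binary. For a nonempty set $S$ of columns of a binary matrix, let $z$ be the sum over the integers of the columns in $S$. $S$ is called $1$-free if no entry of $z$ equals $1$, and even if all entries of $z$ are even. For a binary $m\times n$ matrix $A$ with $m<n$: $\varepsilon(A)$ is the smallest cardinality of a nonempty even set of columns, and $u(A)$ the smallest cardinality of a nonempty $1$-free set of columns. For $m<n$, $\varepsilon(m,n)$ and $u(m,n)$ are the maxima of $\varepsilon(A)$, resp. $u(A)$, over all binary $m\times n$ matrices. *)

theory Defs
  imports Main
begin

text \<open>A binary m x n matrix is represented by A :: nat => nat => bool, where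
  A i j (i < m, j < n) says that entry (i,j) equals 1; entries outside the
  range are irrelevant.\<close>

definition colsum :: "(nat \<Rightarrow> nat \<Rightarrow> bool) \<Rightarrow> nat set \<Rightarrow> nat \<Rightarrow> nat" where
  "colsum A S i = card {j \<in> S. A i j}"

definition even_set :: "nat \<Rightarrow> nat \<Rightarrow> (nat \<Rightarrow> nat \<Rightarrow> bool) \<Rightarrow> nat set \<Rightarrow> bool" where
  "even_set m n A S \<longleftrightarrow> S \<noteq> {} \<and> S \<subseteq> {..<n} \<and> (\<forall>i<m. even (colsum A S i))"

definition one_free_set :: "nat \<Rightarrow> nat \<Rightarrow> (nat \<Rightarrow> nat \<Rightarrow> bool) \<Rightarrow> nat set \<Rightarrow> bool" where
  "one_free_set m n A S \<longleftrightarrow> S \<noteq> {} \<and> S \<subseteq> {..<n} \<and> (\<forall>i<m. colsum A S i \<noteq> 1)"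

definition eps_mat :: "nat \<Rightarrow> nat \<Rightarrow> (nat \<Rightarrow> nat \<Rightarrow> bool) \<Rightarrow> nat" where
  "eps_mat m n A = (LEAST k. \<exists>S. even_set m n A S \<and> card S = k)"

definition u_mat :: "nat \<Rightarrow> nat \<Rightarrow> (nat \<Rightarrow> nat \<Rightarrow> bool) \<Rightarrow> nat" where
  "u_mat m n A = (LEAST k. \<exists>S. one_free_set m n A S \<and> card S = k)"

definition eps_max :: "nat \<Rightarrow> nat \<Rightarrow> nat" where
  "eps_max m n = Max {eps_mat m n A | A. True}"

definition u_max :: "nat \<Rightarrow> nat \<Rightarrow> nat" where
  "u_max m n = Max {u_mat m n A | A. True}"

end

theory Submission
  imports Defs
begin


definition sd :: "nat set \<Rightarrow> nat set \<Rightarrow> nat set" where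
  "sd X Y = (X - Y) \<union> (Y - X)"

lemma card_sd:
  assumes "finite X" "finite Y"
  shows "card (sd X Y) + 2 * card (X \<inter> Y) = card X + card Y"
proof -
  have e: "sd X Y = (X \<union> Y) - (X \<inter> Y)" unfolding sd_def by auto
  have "card ((X \<union> Y) - (X \<inter> Y)) = card (X \<union> Y) - card (X \<inter> Y)"
    by (rule card_Diff_subset) (use assms in auto)
  moreover have "card (X \<inter> Y) \<le> card (X \<union> Y)"
    by (rule card_mono) (use assms in auto)
  ultimately show ?thesis using card_Un_Int[OF assms] e by simp
qed

lemma colsum_sd:
  assumes "finite X" "finite Y"
  shows "even (colsum A (sd X Y) i) = (even (colsum A X i) = even (colsum A Y i))"
proof -
  have e: "{j \<in> sd X Y. A i j} = sd {j\<in>X. A i j} {j\<in>Y. A i j}" unfolding sd_def by auto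
  have "card (sd {j\<in>X. A i j} {j\<in>Y. A i j}) + 2 * card ({j\<in>X. A i j} \<inter> {j\<in>Y. A i j})
      = card {j\<in>X. A i j} + card {j\<in>Y. A i j}"
    by (rule card_sd) (use assms in auto)
  then show ?thesis unfolding colsum_def e by presburger
qed

definition evs :: "nat \<Rightarrow> nat \<Rightarrow> (nat \<Rightarrow> nat \<Rightarrow> bool) \<Rightarrow> nat set \<Rightarrow> bool" where
  "evs m N A S \<longleftrightarrow> S \<subseteq> {..<N} \<and> (\<forall>i<m. even (colsum A S i))"

lemma evs_sd: "evs m N A X \<Longrightarrow> evs m N A Y \<Longrightarrow> evs m N A (sd X Y)"
  unfolding evs_def
  apply (intro conjI)
   apply (auto simp: sd_def)[1]
  using colsum_sd by (metis finite_lessThan finite_subset)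

lemma sd_cancel: "sd (sd X Y) Y = X" unfolding sd_def by auto

lemma E8:
  assumes "m + 3 = N"
  shows "8 \<le> card {S. evs m N A S}"
proof -
  define E where "E = {S. evs m N A S}"
  define \<phi> where "\<phi> S = {i\<in>{..<m}. odd (colsum A S i)}" for S
  define rep where "rep v = (SOME S. S \<subseteq> {..<N} \<and> \<phi> S = v)" for v
  define g where "g S = (\<phi> S, sd S (rep (\<phi> S)))" for S
  have finE: "finite E" unfolding E_def evs_def
    by (rule finite_subset[of _ "Pow {..<N}"]) auto
  have rep: "rep (\<phi> S) \<subseteq> {..<N} \<and> \<phi> (rep (\<phi> S)) = \<phi> S" if "S \<subseteq> {..<N}" for S
    unfolding rep_def by (rule someI[of _ S]) (use that in auto)
  have inj: "inj_on g (Pow {..<N})"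
  proof (rule inj_onI)
    fix S S' assume "S \<in> Pow {..<N}" "S' \<in> Pow {..<N}" "g S = g S'"
    then have "\<phi> S = \<phi> S'" "sd S (rep (\<phi> S)) = sd S' (rep (\<phi> S'))" unfolding g_def by auto
    then show "S = S'" by (metis sd_cancel)
  qed
  have img: "g ` Pow {..<N} \<subseteq> Pow {..<m} \<times> E"
  proof
    fix x assume "x \<in> g ` Pow {..<N}"
    then obtain S where S: "S \<subseteq> {..<N}" "x = g S" by auto
    let ?R = "rep (\<phi> S)"
    have R: "?R \<subseteq> {..<N}" "\<phi> ?R = \<phi> S" using rep[OF S(1)] by auto
    have "even (colsum A (sd S ?R) i)" if "i < m" for i
    proof -
      have "odd (colsum A ?R i) = odd (colsum A S i)"
        using R(2) that unfolding \<phi>_def by blast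
      then show ?thesis using colsum_sd[of S ?R A i] S(1) R(1)
        by (meson finite_lessThan finite_subset)
    qed
    moreover have "sd S ?R \<subseteq> {..<N}" using S(1) R(1) unfolding sd_def by auto
    ultimately show "x \<in> Pow {..<m} \<times> E" using S unfolding g_def E_def evs_def \<phi>_def by auto
  qed
  have "card (Pow {..<N}) \<le> card (Pow {..<m} \<times> E)"
    by (rule card_inj_on_le[OF inj img]) (use finE in auto)
  then have "2 ^ N \<le> 2 ^ m * card E" by (simp add: card_Pow card_cartesian_product)
  moreover have "(2::nat) ^ N = 2 ^ m * 8" using assms by (auto simp: power_add)
  ultimately have "2 ^ m * 8 \<le> 2 ^ m * card E" by simp
  then show ?thesis unfolding E_def by (simp add: mult_le_cancel1)
qed


lemma arith7:
  fixes c1 c2 c3 c4 c5 c6 c7 N :: nat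
  assumes s: "c1+c2+c3+c4+c5+c6+c7 \<le> 4*N"
    and p4: "even c4 = (even c1 = even c2)" and p5: "even c5 = (even c1 = even c3)"
    and p6: "even c6 = (even c2 = even c3)" and p7: "even c7 = (even c4 = even c3)"
  shows "\<exists>c\<in>{c1,c2,c3,c4,c5,c6,c7}. 7*c \<le> 4*N \<and> (N mod 7 = 2 \<longrightarrow> c \<le> 4*(N div 7))"
proof -
  define P where "P c = (7*c \<le> 4*N \<and> (N mod 7 = 2 \<longrightarrow> c \<le> 4*(N div 7)))" for c
  define q where "q = N div 7"
  have nP: "(N mod 7 \<noteq> 2 \<longrightarrow> 4*N < 7*c) \<and> (N mod 7 = 2 \<longrightarrow> 4*q < c)" if "\<not> P c" for c
    using that unfolding P_def q_def by auto
  have e: "4*q+1+(if even c then 1 else 0) \<le> c" if "4*q < c" for c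
  proof (cases "even c")
    case True
    then obtain k where "c = 2*k" by blast
    then show ?thesis using that by auto
  qed (use that in auto)
  have "P c1 \<or> P c2 \<or> P c3 \<or> P c4 \<or> P c5 \<or> P c6 \<or> P c7"
  proof (rule ccontr)
    assume "\<not> ?thesis"
    then have n: "\<not> P c1" "\<not> P c2" "\<not> P c3" "\<not> P c4" "\<not> P c5" "\<not> P c6" "\<not> P c7" by simp_all
    show False
    proof (cases "N mod 7 = 2")
      case False
      have "4*N < 7*c1" "4*N < 7*c2" "4*N < 7*c3" "4*N < 7*c4" "4*N < 7*c5" "4*N < 7*c6" "4*N < 7*c7"
        using nP[OF n(1)] nP[OF n(2)] nP[OF n(3)] nP[OF n(4)] nP[OF n(5)] nP[OF n(6)] nP[OF n(7)] False
        by blast+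
      then show False using s by linarith
    next
      case True
      have N: "N = 7*q+2" using True div_mult_mod_eq[of N 7] unfolding q_def by linarith
      define b where "b (c::nat) = (if even c then 1 else (0::nat))" for c
      have g: "4*q+1+b c1 \<le> c1" "4*q+1+b c2 \<le> c2" "4*q+1+b c3 \<le> c3" "4*q+1+b c4 \<le> c4"
        "4*q+1+b c5 \<le> c5" "4*q+1+b c6 \<le> c6" "4*q+1+b c7 \<le> c7"
        unfolding b_def
        using e nP[OF n(1)] nP[OF n(2)] nP[OF n(3)] nP[OF n(4)] nP[OF n(5)] nP[OF n(6)] nP[OF n(7)] True
        by blast+
      have x: "(3::nat) \<le> b c1 + b c2 + b c3 + b c4 + b c5 + b c6 + b c7"
        unfolding b_def unfolding p7 unfolding p4 p5 p6 by (cases "even c1"; cases "even c2"; cases "even c3") simp_all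
      show False
        using s N g x by linarith
    qed
  qed
  then show ?thesis unfolding P_def by blast
qed

lemma sd_empty: "sd X Y = {} \<longleftrightarrow> X = Y" unfolding sd_def by auto

lemma even_card_sd: "finite X \<Longrightarrow> finite Y \<Longrightarrow> even (card (sd X Y)) = (even (card X) = even (card Y))"
proof -
  assume "finite X" "finite Y"
  then have "even (card (sd X Y) + 2*card (X \<inter> Y)) = even (card X + card Y)"
    using card_sd[of X Y] by simp
  then show ?thesis by simp
qed

lemma card_as_sum: "(S::nat set) \<subseteq> {..<N} \<Longrightarrow> card S = (\<Sum>j<N. of_bool (j \<in> S))"
proof -
  assume "S \<subseteq> {..<N}"
  then have e: "{..<N} \<inter> {x. x \<in> S} = S" by auto
  have "card ({..<N} \<inter> S) = (\<Sum>x\<in>{..<N} \<inter> S. 1::nat)" by (rule card_eq_sum)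
  also have "\<dots> = (\<Sum>x<N. if x\<in>S then 1 else (0::nat))" by (rule sum.inter_restrict) simp
  finally have "card ({..<N} \<inter> S) = (\<Sum>x<N. if x\<in>S then 1 else (0::nat))" .
  moreover have "(\<Sum>x<N. if x\<in>S then 1 else (0::nat)) = (\<Sum>j<N. of_bool (j \<in> S))"
    by (rule sum.cong) (auto simp: of_bool_def)
  ultimately show ?thesis using e by simp
qed

lemma upper_set:
  assumes "m + 3 = N"
  shows "\<exists>S. even_set m N A S \<and> 7*card S \<le> 4*N \<and> (N mod 7 = 2 \<longrightarrow> card S \<le> 4*(N div 7))"
proof -
  define E where "E = {S. evs m N A S}"
  have c8: "8 \<le> card E" unfolding E_def by (rule E8[OF assms])
  have finE: "finite E" unfolding E_def evs_def
    by (rule finite_subset[of _ "Pow {..<N}"]) auto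
  have sdE: "sd X Y \<in> E" if "X \<in> E" "Y \<in> E" for X Y using that evs_sd unfolding E_def by auto
  have pick: "\<exists>x\<in>E. x \<notin> set F" if "length F < 8" for F
  proof (rule ccontr)
    assume "\<not> ?thesis"
    then have "E \<subseteq> set F" by blast
    then have "card E \<le> card (set F)" by (rule card_mono[OF finite_set])
    then show False using card_length[of F] that c8 by linarith
  qed
  obtain S1 where S1: "S1 \<in> E" "S1 \<notin> set [{}]" using pick[of "[{}]"] by auto
  obtain S2 where S2: "S2 \<in> E" "S2 \<notin> set [{}, S1]" using pick[of "[{}, S1]"] by auto
  obtain S3 where S3: "S3 \<in> E" "S3 \<notin> set [{}, S1, S2, sd S1 S2]" using pick[of "[{}, S1, S2, sd S1 S2]"] by auto
  define S4 where "S4 = sd S1 S2"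
  define S5 where "S5 = sd S1 S3"
  define S6 where "S6 = sd S2 S3"
  define S7 where "S7 = sd S4 S3"
  have inE: "S1 \<in> E" "S2 \<in> E" "S3 \<in> E" "S4 \<in> E" "S5 \<in> E" "S6 \<in> E" "S7 \<in> E"
    using S1 S2 S3 sdE unfolding S4_def S5_def S6_def S7_def by auto
  have ne: "S4 \<noteq> {}" "S5 \<noteq> {}" "S6 \<noteq> {}" "S7 \<noteq> {}"
    using S1 S2 S3 unfolding S4_def S5_def S6_def S7_def sd_empty by auto
  have sub: "X \<subseteq> {..<N}" if "X \<in> E" for X using that unfolding E_def evs_def by auto
  have fin: "finite X" if "X \<in> E" for X using sub[OF that] finite_subset by blast
  have pw: "of_bool (j \<in> S1) + of_bool (j \<in> S2) + of_bool (j \<in> S3) + of_bool (j \<in> S4)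
      + of_bool (j \<in> S5) + of_bool (j \<in> S6) + of_bool (j \<in> S7) \<le> (4::nat)" for j
    unfolding S4_def S5_def S6_def S7_def sd_def
    by (cases "j \<in> S1"; cases "j \<in> S2"; cases "j \<in> S3") auto
  have "card S1 + card S2 + card S3 + card S4 + card S5 + card S6 + card S7
     = (\<Sum>j<N. of_bool (j \<in> S1) + of_bool (j \<in> S2) + of_bool (j \<in> S3) + of_bool (j \<in> S4)
      + of_bool (j \<in> S5) + of_bool (j \<in> S6) + of_bool (j \<in> S7))"
    using inE by (simp add: card_as_sum[OF sub] sum.distrib)
  also have "\<dots> \<le> (\<Sum>j<N. 4)" by (rule sum_mono) (rule pw)
  finally have s: "card S1 + card S2 + card S3 + card S4 + card S5 + card S6 + card S7 \<le> 4*N" by simp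
  have par: "even (card S4) = (even (card S1) = even (card S2))"
    "even (card S5) = (even (card S1) = even (card S3))"
    "even (card S6) = (even (card S2) = even (card S3))"
    "even (card S7) = (even (card S4) = even (card S3))"
    unfolding S4_def S5_def S6_def S7_def
    using even_card_sd fin inE S4_def by auto
  define Q where "Q (S::nat set) = (7*card S \<le> 4*N \<and> (N mod 7 = 2 \<longrightarrow> card S \<le> 4*(N div 7)))" for S
  have "Q S1 \<or> Q S2 \<or> Q S3 \<or> Q S4 \<or> Q S5 \<or> Q S6 \<or> Q S7"
    using arith7[OF s par] unfolding Q_def by (simp only: insert_iff empty_iff bex_simps) blast
  moreover have ev: "even_set m N A X" if "X \<in> E" "X \<noteq> {}" for X
    using that unfolding E_def evs_def even_set_def by auto
  have ne': "S1 \<noteq> {}" "S2 \<noteq> {}" "S3 \<noteq> {}" using S1 S2 S3 by auto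
  have key: "\<exists>S. even_set m N A S \<and> Q S" if "X \<in> E" "X \<noteq> {}" "Q X" for X using ev that by blast
  ultimately have "\<exists>S. even_set m N A S \<and> Q S"
  proof (elim disjE)
    assume "Q S1" then show ?thesis by (rule key[OF inE(1) ne'(1)])
  next
    assume "Q S2" then show ?thesis by (rule key[OF inE(2) ne'(2)])
  next
    assume "Q S3" then show ?thesis by (rule key[OF inE(3) ne'(3)])
  next
    assume "Q S4" then show ?thesis by (rule key[OF inE(4) ne(1)])
  next
    assume "Q S5" then show ?thesis by (rule key[OF inE(5) ne(2)])
  next
    assume "Q S6" then show ?thesis by (rule key[OF inE(6) ne(3)])
  next
    assume "Q S7" then show ?thesis by (rule key[OF inE(7) ne(4)])
  qed
  then show ?thesis unfolding Q_def by blast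
qed



lemma sum7: "(\<Sum>j<7. (f::nat\<Rightarrow>nat) j) = f 0 + f 1 + f 2 + f 3 + f 4 + f 5 + (f 6::nat)"
  by (simp add: eval_nat_numeral)

lemma bcheck:
  fixes b0 b1 b2 b3 b4 b5 b6 :: bool
  assumes "b0 \<or> b1 \<or> b2 \<or> b3 \<or> b4 \<or> b5 \<or> b6"
    "of_bool b0 + of_bool b1 + of_bool b4 \<noteq> (1::nat)"
    "of_bool b0 + of_bool b2 + of_bool b5 \<noteq> (1::nat)"
    "of_bool b0 + of_bool b3 + of_bool b6 \<noteq> (1::nat)"
    "of_bool b1 + of_bool b2 + of_bool b6 \<noteq> (1::nat)"
  shows "4 \<le> of_bool b0 + of_bool b1 + of_bool b2 + of_bool b3 + of_bool b4 + of_bool b5 + (of_bool b6::nat)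
    \<and> 1 \<le> of_bool b0 + of_bool b1 + (of_bool b2::nat)
    \<and> 2 \<le> of_bool b0 + of_bool b1 + of_bool b2 + (of_bool b3::nat)
    \<and> 2 \<le> of_bool b0 + of_bool b1 + of_bool b2 + of_bool b3 + (of_bool b4::nat)
    \<and> 3 \<le> of_bool b0 + of_bool b1 + of_bool b2 + of_bool b3 + of_bool b4 + (of_bool b5::nat)"
  using assms
  by (cases b0; cases b1; cases b2; cases b3; cases b4; cases b5; cases b6) simp_all

lemma count_shift:
  fixes M :: nat
  shows "card {j. j < M + 7 \<and> P (j mod 7)} = card {j. j < 7 \<and> P j} + card {j. j < M \<and> P (j mod 7)}"
proof -
  have e: "{j. j < M + 7 \<and> P (j mod 7)} = {j. j < 7 \<and> P j} \<union> (\<lambda>j. j + 7) ` {j. j < M \<and> P (j mod 7)}"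
  proof (intro equalityI subsetI)
    fix j assume j: "j \<in> {j. j < M + 7 \<and> P (j mod 7)}"
    show "j \<in> {j. j < 7 \<and> P j} \<union> (\<lambda>j. j + 7) ` {j. j < M \<and> P (j mod 7)}"
    proof (cases "j < 7")
      case True then show ?thesis using j by auto
    next
      case False
      then have jj: "j = (j - 7) + 7" by simp
      moreover have "(j - 7) mod 7 = j mod 7" by (metis jj mod_add_self2)
      ultimately show ?thesis using j False by (auto intro!: image_eqI[of _ _ "j - 7"])
    qed
  next
    fix j assume "j \<in> {j. j < 7 \<and> P j} \<union> (\<lambda>j. j + 7) ` {j. j < M \<and> P (j mod 7)}"
    then show "j \<in> {j. j < M + 7 \<and> P (j mod 7)}" by auto
  qed
  have "card ({j. j < 7 \<and> P j} \<union> (\<lambda>j. j + 7) ` {j. j < M \<and> P (j mod 7)})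
      = card {j. j < 7 \<and> P j} + card ((\<lambda>j. j + 7) ` {j. j < M \<and> P (j mod 7)})"
    by (rule card_Un_disjoint) auto
  also have "card ((\<lambda>j. j + 7) ` {j. j < M \<and> P (j mod 7)}) = card {j. j < M \<and> P (j mod 7)}"
    by (rule card_image) (auto simp: inj_on_def)
  finally show ?thesis using e by simp
qed

lemma count_mod:
  fixes r q :: nat
  assumes "r \<le> 7"
  shows "card {j. j < 7*q + r \<and> P (j mod 7)} = q * card {j. j < 7 \<and> P j} + card {j. j < r \<and> P j}"
proof (induction q)
  case 0
  have "{j. j < r \<and> P (j mod 7)} = {j. j < r \<and> P j}" using assms by auto
  then show ?case by simp
next
  case (Suc q)
  have e: "7 * Suc q + r = (7*q + r) + 7" by simp
  show ?case unfolding e count_shift[of "7*q+r" P] Suc by simp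
qed

lemma card3:
  fixes a b c :: nat
  assumes "a \<noteq> b" "a \<noteq> c" "b \<noteq> c"
  shows "card {j\<in>S. j = a \<or> j = b \<or> j = c} = of_bool (a\<in>S) + of_bool (b\<in>S) + (of_bool (c\<in>S)::nat)"
proof -
  have "{j\<in>S. j = a \<or> j = b \<or> j = c} = (if a\<in>S then {a} else {}) \<union> (if b\<in>S then {b} else {}) \<union> (if c\<in>S then {c} else {})"
    by auto
  then show ?thesis using assms by (cases "a\<in>S"; cases "b\<in>S"; cases "c\<in>S") simp_all
qed

lemma card_lt_sum: "card {j. j < (r::nat) \<and> j \<in> S} = (\<Sum>j<r. of_bool (j \<in> S))"
proof -
  have "card {j. j < r \<and> j \<in> S} = (\<Sum>j<r. of_bool (j \<in> {j. j < r \<and> j \<in> S}))"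
    by (rule card_as_sum) auto
  also have "\<dots> = (\<Sum>j<r. of_bool (j \<in> S))" by (rule sum.cong) auto
  finally show ?thesis .
qed

definition Brow :: "nat \<Rightarrow> nat \<Rightarrow> bool" where
  "Brow k j = ((k=0 \<and> (j=0 \<or> j=1 \<or> j=4)) \<or> (k=1 \<and> (j=0 \<or> j=2 \<or> j=5))
     \<or> (k=2 \<and> (j=0 \<or> j=3 \<or> j=6)) \<or> (k=3 \<and> (j=1 \<or> j=2 \<or> j=6)))"

definition A0 :: "nat \<Rightarrow> nat \<Rightarrow> nat \<Rightarrow> bool" where
  "A0 N i j = (if i < N - 7 then (j = i \<or> j = i + 7) else Brow (i - (N - 7)) j)"

lemma sumr: "(\<Sum>j<3. (f::nat\<Rightarrow>nat) j) = f 0 + f 1 + f 2"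
  "(\<Sum>j<4. (f::nat\<Rightarrow>nat) j) = f 0 + f 1 + f 2 + f 3"
  "(\<Sum>j<5. (f::nat\<Rightarrow>nat) j) = f 0 + f 1 + f 2 + f 3 + f 4"
  "(\<Sum>j<6. (f::nat\<Rightarrow>nat) j) = f 0 + f 1 + f 2 + f 3 + f 4 + f 5"
  by (simp_all add: eval_nat_numeral)

lemma constr_lb:
  assumes N: "7 \<le> N" and S: "one_free_set (N-3) N (A0 N) S"
  shows "4*(N div 7) + (if N mod 7 = 2 then 0 else 4*(N mod 7) div 7) \<le> card S"
proof -
  define K where "K = N - 7"
  from S have Ssub: "S \<subseteq> {..<N}" and Sne: "S \<noteq> {}"
    and cs: "\<And>i. i < N-3 \<Longrightarrow> colsum (A0 N) S i \<noteq> 1" unfolding one_free_set_def by auto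
  have pair: "i\<in>S \<longleftrightarrow> i+7\<in>S" if "i<K" for i
  proof -
    have "colsum (A0 N) S i = card {j\<in>S. j = i \<or> j = i+7}"
      unfolding colsum_def A0_def using that K_def by simp
    moreover have "i < N-3" using that K_def N by simp
    ultimately have c: "card {j\<in>S. j = i \<or> j = i+7} \<noteq> 1" using cs by metis
    show ?thesis
    proof (rule ccontr)
      assume "\<not> ?thesis"
      then have "{j\<in>S. j = i \<or> j = i+7} = {i} \<or> {j\<in>S. j = i \<or> j = i+7} = {i+7}" by auto
      then show False using c by auto
    qed
  qed
  have modS: "j < N \<Longrightarrow> (j \<in> S \<longleftrightarrow> j mod 7 \<in> S)" for j
  proof (induction j rule: less_induct)
    case (less j)
    show ?case
    proof (cases "j < 7")
      case True then show ?thesis by simp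
    next
      case False
      then have jj: "j = (j-7)+7" by simp
      have "j - 7 < K" using less.prems False K_def by simp
      then have "(j-7) \<in> S \<longleftrightarrow> j \<in> S" using pair[of "j-7"] jj by simp
      moreover have "(j-7) \<in> S \<longleftrightarrow> (j-7) mod 7 \<in> S" using less.IH[of "j-7"] less.prems False by simp
      moreover have "(j-7) mod 7 = j mod 7" by (metis jj mod_add_self2)
      ultimately show ?thesis by simp
    qed
  qed
  have rowB: "card {j\<in>S. Brow k j} \<noteq> 1" if "k < 4" for k
  proof -
    have "colsum (A0 N) S (K+k) = card {j\<in>S. Brow k j}" unfolding colsum_def A0_def K_def by simp
    moreover have "K + k < N - 3" using that K_def N by simp
    ultimately show ?thesis using cs by metis
  qed
  have r0: "card {j\<in>S. Brow 0 j} = of_bool (0\<in>S) + of_bool (1\<in>S) + (of_bool (4\<in>S)::nat)"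
    unfolding Brow_def using card3[of 0 1 4 S] by simp
  have r1: "card {j\<in>S. Brow 1 j} = of_bool (0\<in>S) + of_bool (2\<in>S) + (of_bool (5\<in>S)::nat)"
    unfolding Brow_def using card3[of 0 2 5 S] by simp
  have r2: "card {j\<in>S. Brow 2 j} = of_bool (0\<in>S) + of_bool (3\<in>S) + (of_bool (6\<in>S)::nat)"
    unfolding Brow_def using card3[of 0 3 6 S] by simp
  have r3: "card {j\<in>S. Brow 3 j} = of_bool (1\<in>S) + of_bool (2\<in>S) + (of_bool (6\<in>S)::nat)"
    unfolding Brow_def using card3[of 1 2 6 S] by simp
  obtain j where j: "j \<in> S" using Sne by auto
  then have "j mod 7 \<in> S" using modS Ssub by auto
  moreover have "j mod 7 = 0 \<or> j mod 7 = 1 \<or> j mod 7 = 2 \<or> j mod 7 = 3 \<or> j mod 7 = 4 \<or> j mod 7 = 5 \<or> j mod 7 = 6"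
    by presburger
  ultimately have ne: "0\<in>S \<or> 1\<in>S \<or> 2\<in>S \<or> 3\<in>S \<or> 4\<in>S \<or> 5\<in>S \<or> 6\<in>S" by auto
  note bc = bcheck[OF ne rowB[of 0, unfolded r0] rowB[of 1, unfolded r1] rowB[of 2, unfolded r2] rowB[of 3, unfolded r3]]
  define q where "q = N div 7"
  define r where "r = N mod 7"
  have Nqr: "N = 7*q + r" unfolding q_def r_def by simp
  have r7: "r < 7" unfolding r_def by simp
  have "S = {j. j < N \<and> (j mod 7) \<in> S}" using modS Ssub by auto
  then have cS: "card S = q * card {j. j < 7 \<and> j \<in> S} + card {j. j < r \<and> j \<in> S}"
    using count_mod[of r q "\<lambda>p. p \<in> S"] r7 Nqr by simp
  have c7: "4 \<le> card {j. j < 7 \<and> j \<in> S}" using bc unfolding card_lt_sum sum7 by simp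
  then have "4*q \<le> q * card {j. j < 7 \<and> j \<in> S}" by simp
  moreover have "(if r = 2 then 0 else 4*r div 7) \<le> card {j. j < r \<and> j \<in> S}"
  proof -
    have rc: "r = 0 \<or> r = 1 \<or> r = 2 \<or> r = 3 \<or> r = 4 \<or> r = 5 \<or> r = 6" using r7 by presburger
    have t: "card {j. j < r \<and> j \<in> S} = (\<Sum>j<r. of_bool (j \<in> S))" by (rule card_lt_sum)
    from rc show ?thesis unfolding t by (elim disjE) (use bc in \<open>simp_all add: sumr\<close>)
  qed
  ultimately show ?thesis using cS unfolding q_def[symmetric] r_def[symmetric] by linarith
qed



lemma even_one_free: "even_set m N A S \<Longrightarrow> one_free_set m N A S"
  unfolding even_set_def one_free_set_def by auto

lemma eps_le:
  assumes "m + 3 = N"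
  shows "7 * eps_mat m N A \<le> 4*N \<and> (N mod 7 = 2 \<longrightarrow> eps_mat m N A \<le> 4*(N div 7))"
proof -
  obtain S where S: "even_set m N A S" "7*card S \<le> 4*N" "N mod 7 = 2 \<longrightarrow> card S \<le> 4*(N div 7)"
    using upper_set[OF assms] by blast
  have "eps_mat m N A \<le> card S" unfolding eps_mat_def by (rule Least_le) (use S in blast)
  then show ?thesis using S by linarith
qed

lemma u_le_eps:
  assumes "m + 3 = N"
  shows "u_mat m N A \<le> eps_mat m N A"
proof -
  obtain S0 where "even_set m N A S0" using upper_set[OF assms] by blast
  then have "\<exists>k S. even_set m N A S \<and> card S = k" by blast
  then have "\<exists>S. even_set m N A S \<and> card S = eps_mat m N A"
    unfolding eps_mat_def by (rule LeastI_ex)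
  then obtain S where "even_set m N A S" "card S = eps_mat m N A" by blast
  then show ?thesis unfolding u_mat_def by (intro Least_le) (blast intro: even_one_free)
qed

lemma u_ge:
  assumes "m + 3 = N" "\<And>S. one_free_set m N A S \<Longrightarrow> d \<le> card S"
  shows "d \<le> u_mat m N A"
proof -
  obtain S0 where "even_set m N A S0" using upper_set[OF assms(1)] by blast
  then have "\<exists>k S. one_free_set m N A S \<and> card S = k" by (blast intro: even_one_free)
  then have "\<exists>S. one_free_set m N A S \<and> card S = u_mat m N A"
    unfolding u_mat_def by (rule LeastI_ex)
  then show ?thesis using assms(2) by metis
qed

lemma max_eq:
  fixes f :: "(nat \<Rightarrow> nat \<Rightarrow> bool) \<Rightarrow> nat"
  assumes "\<And>A. f A \<le> d" "f A1 = d"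
  shows "Max {f A | A. True} = d"
proof (rule Max_eqI)
  show "finite {f A | A. True}"
    by (rule finite_subset[of _ "{..d}"]) (use assms in auto)
  show "y \<le> d" if "y \<in> {f A | A. True}" for y using that assms by auto
  show "d \<in> {f A | A. True}" using assms by auto
qed

definition A1 :: "nat \<Rightarrow> nat \<Rightarrow> bool" where "A1 i j = True"

definition A3 :: "nat \<Rightarrow> nat \<Rightarrow> bool" where
  "A3 i j = ((i=0 \<and> (j=0 \<or> j=2 \<or> j=4)) \<or> (i=1 \<and> (j=1 \<or> j=2 \<or> j=5)) \<or> (i=2 \<and> (j=3 \<or> j=4 \<or> j=5)))"

lemma A1_lb:
  assumes "0 < n" "one_free_set n N A1 S"
  shows "2 \<le> card S"
proof -
  have "S \<subseteq> {..<N}" "S \<noteq> {}" "colsum A1 S 0 \<noteq> 1" using assms unfolding one_free_set_def by auto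
  moreover have "colsum A1 S 0 = card S" unfolding colsum_def A1_def by simp
  moreover have "finite S" using calculation(1) finite_subset by blast
  ultimately show ?thesis by (metis One_nat_def card_0_eq less_2_cases not_less)
qed

lemma bcheck3:
  fixes b0 b1 b2 b3 b4 b5 :: bool
  assumes "b0 \<or> b1 \<or> b2 \<or> b3 \<or> b4 \<or> b5"
    "of_bool b0 + of_bool b2 + of_bool b4 \<noteq> (1::nat)"
    "of_bool b1 + of_bool b2 + of_bool b5 \<noteq> (1::nat)"
    "of_bool b3 + of_bool b4 + of_bool b5 \<noteq> (1::nat)"
  shows "3 \<le> of_bool b0 + of_bool b1 + of_bool b2 + of_bool b3 + of_bool b4 + (of_bool b5::nat)"
  using assms
  by (cases b0; cases b1; cases b2; cases b3; cases b4; cases b5) simp_all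

lemma A3_lb:
  assumes "one_free_set 3 6 A3 S"
  shows "3 \<le> card S"
proof -
  have Ssub: "S \<subseteq> {..<6}" and Sne: "S \<noteq> {}" and cs: "\<And>i. i < 3 \<Longrightarrow> colsum A3 S i \<noteq> 1"
    using assms unfolding one_free_set_def by auto
  have r0: "colsum A3 S 0 = of_bool (0\<in>S) + of_bool (2\<in>S) + (of_bool (4\<in>S)::nat)"
    unfolding colsum_def A3_def using card3[of 0 2 4 S] by simp
  have r1: "colsum A3 S 1 = of_bool (1\<in>S) + of_bool (2\<in>S) + (of_bool (5\<in>S)::nat)"
    unfolding colsum_def A3_def using card3[of 1 2 5 S] by simp
  have r2: "colsum A3 S 2 = of_bool (3\<in>S) + of_bool (4\<in>S) + (of_bool (5\<in>S)::nat)"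
    unfolding colsum_def A3_def using card3[of 3 4 5 S] by simp
  obtain j where j: "j \<in> S" using Sne by auto
  then have "j < 6" using Ssub by auto
  then have "j = 0 \<or> j = 1 \<or> j = 2 \<or> j = 3 \<or> j = 4 \<or> j = 5" by presburger
  then have ne: "0\<in>S \<or> 1\<in>S \<or> 2\<in>S \<or> 3\<in>S \<or> 4\<in>S \<or> 5\<in>S" using j by auto
  have "card S = (\<Sum>j<6. of_bool (j \<in> S))" by (rule card_as_sum[OF Ssub])
  then show ?thesis
    using bcheck3[OF ne cs[of 0, unfolded r0] cs[of 1, unfolded r1] cs[of 2, unfolded r2]]
    by (simp add: sumr)
qed

lemma lower:
  assumes "0 < n" "(n+1) mod 7 \<noteq> 0"
  shows "\<exists>A. (4*n+12) div 7 \<le> u_mat n (n+3) A"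
proof (cases "4 \<le> n")
  case True
  define N where "N = n + 3"
  have N7: "7 \<le> N" using True N_def by simp
  have nN: "n = N - 3" using N_def by simp
  have r: "N mod 7 \<noteq> 2" using assms(2) unfolding N_def by presburger
  have "4*n+12 = 4*(N mod 7) + 7*(4*(N div 7))" using div_mult_mod_eq[of N 7] N_def by linarith
  then have d: "(4*n+12) div 7 = 4*(N div 7) + 4*(N mod 7) div 7" by simp
  have "(4*n+12) div 7 \<le> u_mat n (n+3) (A0 N)"
  proof (rule u_ge)
    show "n + 3 = n + 3" by simp
    fix S assume "one_free_set n (n + 3) (A0 N) S"
    then have "one_free_set (N-3) N (A0 N) S" using N_def by simp
    from constr_lb[OF N7 this] show "(4*n+12) div 7 \<le> card S" using r d by simp
  qed
  then show ?thesis by blast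
next
  case False
  then have "n = 1 \<or> n = 2 \<or> n = 3" using assms(1) by presburger
  then show ?thesis
  proof (elim disjE)
    assume n: "n = 1"
    have "(4*n+12) div 7 \<le> u_mat n (n+3) A1"
      by (rule u_ge) (use A1_lb[of n] n in auto)
    then show ?thesis by blast
  next
    assume n: "n = 2"
    have "(4*n+12) div 7 \<le> u_mat n (n+3) A1"
      by (rule u_ge) (use A1_lb[of n] n in auto)
    then show ?thesis by blast
  next
    assume n: "n = 3"
    have "(4*n+12) div 7 \<le> u_mat n (n+3) A3"
      by (rule u_ge) (use A3_lb n in auto)
    then show ?thesis by blast
  qed
qed

theorem theorem7p1:
  shows "(\<forall>n::nat. 0 < n \<longrightarrow> (n + 1) mod 7 \<noteq> 0 \<longrightarrow>
            u_max n (n + 3) = (4 * n + 12) div 7 \<and> eps_max n (n + 3) = (4 * n + 12) div 7)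
       \<and> (\<forall>m::nat. 0 < m \<longrightarrow> u_max (7 * m - 1) (7 * m + 2) = 4 * m)"
proof (intro conjI allI impI)
  fix n :: nat assume n: "0 < n" "(n + 1) mod 7 \<noteq> 0"
  define d where "d = (4 * n + 12) div 7"
  have epsd: "eps_mat n (n+3) A \<le> d" for A
  proof -
    have "7 * eps_mat n (n+3) A \<le> 4*(n+3)" using eps_le[of n "n+3" A] by simp
    then have "7 * eps_mat n (n+3) A div 7 \<le> (4*n+12) div 7" by (intro div_le_mono) simp
    then show ?thesis unfolding d_def by simp
  qed
  have ud: "u_mat n (n+3) A \<le> d" for A using u_le_eps[of n "n+3" A] epsd[of A] by simp
  obtain A where A: "d \<le> u_mat n (n+3) A" using lower[OF n] unfolding d_def by blast
  have uA: "u_mat n (n+3) A = d" using A ud[of A] by simp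
  have eA: "eps_mat n (n+3) A = d" using A epsd[of A] u_le_eps[of n "n+3" A] by simp
  show "u_max n (n + 3) = (4 * n + 12) div 7"
    unfolding u_max_def d_def[symmetric] by (rule max_eq[of "u_mat n (n+3)" d A, OF ud uA])
  show "eps_max n (n + 3) = (4 * n + 12) div 7"
    unfolding eps_max_def d_def[symmetric] by (rule max_eq[of "eps_mat n (n+3)" d A, OF epsd eA])
next
  fix m :: nat assume m: "0 < m"
  define n where "n = 7*m - 1"
  define N where "N = 7*m + 2"
  have nN: "n + 3 = N" "N - 3 = n" using m unfolding n_def N_def by simp_all
  have N': "N = 2 + m*7" unfolding N_def by simp
  have Nm: "N mod 7 = 2" "N div 7 = m"
    by (simp only: N' mod_mult_self1, simp) (unfold N', subst div_mult_self1, simp_all)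
  have N7: "7 \<le> N" using m unfolding N_def by simp
  have ud: "u_mat n N A \<le> 4*m" for A
    using u_le_eps[OF nN(1), of A] eps_le[OF nN(1), of A] Nm by simp
  have "4*m \<le> u_mat n N (A0 N)"
  proof (rule u_ge[OF nN(1)])
    fix S assume "one_free_set n N (A0 N) S"
    then have "one_free_set (N-3) N (A0 N) S" using nN by simp
    from constr_lb[OF N7 this] show "4*m \<le> card S" using Nm by simp
  qed
  then have uA: "u_mat n N (A0 N) = 4*m" using ud[of "A0 N"] by simp
  show "u_max (7 * m - 1) (7 * m + 2) = 4 * m"
    unfolding n_def[symmetric] N_def[symmetric] u_max_def by (rule max_eq[of "u_mat n N" "4*m" "A0 N", OF ud uA])
qed


end
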